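(* Let $C\in U(2)$ be a quantum coin. If $C$ is non-trivial, then there exist exactly two unit vectors $\gamma_1,\gamma_2\in\mathbb{C}^2$, counted up to multiplication by a global phase $e^{i\eta}$, such that the coin setups $(C,\gamma_1)$ and $(C,\gamma_2)$ are symmetric in distribution. If $C$ is trivial, then there exist uncountably many unit vectors $\gamma\in\mathbb{C}^2$, pairwise not equal up to a global phase, such that $(C,\gamma)$ is symmetric in distribution.
   Context: Let $\mathcal{H}=\ell^2(\mathbb{Z})\otimes\mathbb{C}^2$, with position basis $\{|j\rangle: j\in\mathbb{Z}\}$ of $\ell^2(\mathbb{Z})$ and orthonormal basis $\{|\uparrow\rangle,|\downarrow\rangle\}$ of $\mathbb{C}^2$. A (quantum) coin is any $C\in U(2)$, written $C=a|\uparrow\rangle\langle\uparrow|+b|\uparrow\rangle\langle\downarrow|+c|\downarrow\rangle\langle\uparrow|+d|\downarrow\rangle\langle\downarrow|$; $C$ is called trivial iff $abcd=0$, non-trivial otherwise. The conditional translation is $T=\sum_{j\in\mathbb{Z}}|j+1\rangle\langle j|\otimes|\uparrow\rangle\langle\uparrow|+\sum_{j\in\mathbb{Z}}|j-1\rangle\langle j|\otimes|\downarrow\rangle\langle\downarrow|$ and the walk operator is $W(C)=T(\mathbb{1}\otimes C)$. A coin setup is a pair $(C,\gamma)$ with $C\in U(2)$ and $\gamma\in\mathbb{C}^2$ a unit vector (the initial coin state). Its induced distributions are $p_{(C,\gamma)}(j,n)=\langle\psi_n|(|j\rangle\langle j|\otimes\mathbb{1})|\psi_n\rangle$ with $\psi_n=W(C)^n(|0\rangle\otimes\gamma)$,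 for $j\in\mathbb{Z}$, $n\in\mathbb{N}$. A coin setup is called symmetric in distribution if $p_{(C,\gamma)}(j,n)=p_{(C,\gamma)}(-j,n)$ for all $j\in\mathbb{Z}$ and all $n\in\mathbb{N}$. *)

theory Defs
  imports Complex_Main "HOL-Library.Countable_Set"
begin

text \<open>A coin C = a|u><u| + b|u><d| + c|d><u| + d|d><d| is represented by its
  matrix entries (a, b, c, d) w.r.t. the basis (up, down).  A vector of C^2 is a
  pair (up component, down component).\<close>

type_synonym coin = "complex \<times> complex \<times> complex \<times> complex"
type_synonym cvec = "complex \<times> complex"

definition coin_a :: "coin \<Rightarrow> complex" where "coin_a C = fst C"
definition coin_b :: "coin \<Rightarrow> complex" where "coin_b C = fst (snd C)"
definition coin_c :: "coin \<Rightarrow> complex" where "coin_c C = fst (snd (snd C))"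
definition coin_d :: "coin \<Rightarrow> complex" where "coin_d C = snd (snd (snd C))"

text \<open>C \<in> U(2): C^* C = 1 (for square matrices equivalent to C C^* = 1).\<close>
definition unitary2 :: "coin \<Rightarrow> bool" where
  "unitary2 C \<longleftrightarrow>
     cnj (coin_a C) * coin_a C + cnj (coin_c C) * coin_c C = 1 \<and>
     cnj (coin_b C) * coin_b C + cnj (coin_d C) * coin_d C = 1 \<and>
     cnj (coin_a C) * coin_b C + cnj (coin_c C) * coin_d C = 0"

definition trivial_coin :: "coin \<Rightarrow> bool" where
  "trivial_coin C \<longleftrightarrow> coin_a C * coin_b C * coin_c C * coin_d C = 0"

definition unit_vec :: "cvec \<Rightarrow> bool" where
  "unit_vec v \<longleftrightarrow> (cmod (fst v))\<^sup>2 + (cmod (snd v))\<^sup>2 = 1"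

definition coin_apply :: "coin \<Rightarrow> cvec \<Rightarrow> cvec" where
  "coin_apply C v = (coin_a C * fst v + coin_b C * snd v,
                     coin_c C * fst v + coin_d C * snd v)"

text \<open>States in l^2(Z) \<otimes> C^2 as functions int \<Rightarrow> C^2.  The walk operator
  W(C) = T (1 \<otimes> C): the up component moves j \<mapsto> j+1, the down component j \<mapsto> j-1.\<close>
definition walk :: "coin \<Rightarrow> (int \<Rightarrow> cvec) \<Rightarrow> (int \<Rightarrow> cvec)" where
  "walk C \<psi> = (\<lambda>j. (fst (coin_apply C (\<psi> (j - 1))), snd (coin_apply C (\<psi> (j + 1)))))"

definition init_state :: "cvec \<Rightarrow> int \<Rightarrow> cvec" where
  "init_state \<gamma> = (\<lambda>j. if j = 0 then \<gamma> else (0, 0))"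

definition walk_state :: "coin \<Rightarrow> cvec \<Rightarrow> nat \<Rightarrow> int \<Rightarrow> cvec" where
  "walk_state C \<gamma> n = (walk C ^^ n) (init_state \<gamma>)"

definition walk_prob :: "coin \<Rightarrow> cvec \<Rightarrow> int \<Rightarrow> nat \<Rightarrow> real" where
  "walk_prob C \<gamma> j n =
     (cmod (fst (walk_state C \<gamma> n j)))\<^sup>2 + (cmod (snd (walk_state C \<gamma> n j)))\<^sup>2"

definition symmetric_in_distribution :: "coin \<Rightarrow> cvec \<Rightarrow> bool" where
  "symmetric_in_distribution C \<gamma> \<longleftrightarrow>
     (\<forall>j n. walk_prob C \<gamma> j n = walk_prob C \<gamma> (- j) n)"

definition phase_equiv :: "cvec \<Rightarrow> cvec \<Rightarrow> bool" where
  "phase_equiv v w \<longleftrightarrow> (\<exists>\<eta>::real. v = (cis \<eta> * fst w, cis \<eta> * snd w))"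

end

theory Submission
  imports Defs "HOL-Analysis.Continuum_Not_Denumerable"
begin



lemma walk_state_Suc: "walk_state C \<gamma> (Suc n) = walk C (walk_state C \<gamma> n)"
  by (simp add: walk_state_def)

lemma sym_invariant:
  fixes C :: coin and \<gamma> :: cvec and X Y :: "nat \<Rightarrow> complex" and z :: complex and w :: "int \<Rightarrow> complex"
  assumes w0: "w 0 = 1" and wS: "\<forall>j. w (j+1) = z * w j"
  and e1: "\<forall>n. z * coin_a C * X n = X (Suc n) * coin_d C"
  and e2: "\<forall>n. z * coin_b C * Y n = X (Suc n) * coin_c C"
  and e3: "\<forall>n. coin_d C * Y n = z * Y (Suc n) * coin_a C"
  and e4: "\<forall>n. coin_c C * X n = z * Y (Suc n) * coin_b C"
  and g1: "fst \<gamma> = X 0 * snd \<gamma>" and g2: "snd \<gamma> = Y 0 * fst \<gamma>"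
  shows "\<forall>j. fst (walk_state C \<gamma> n (-j)) = w j * X n * snd (walk_state C \<gamma> n j) \<and>
             snd (walk_state C \<gamma> n (-j)) = w j * Y n * fst (walk_state C \<gamma> n j)"
proof (induction n)
  case 0
  show ?case using w0 g1 g2 by (simp add: walk_state_def init_state_def)
next
  case (Suc n)
  show ?case
  proof
    fix j :: int
    define u where "u = (\<lambda>j. fst (walk_state C \<gamma> n j))"
    define v where "v = (\<lambda>j. snd (walk_state C \<gamma> n j))"
    have IH1: "\<And>j. u (-j) = w j * X n * v j" using Suc u_def v_def by auto
    have IH2: "\<And>j. v (-j) = w j * Y n * u j" using Suc u_def v_def by auto
    let ?a = "coin_a C" and ?b = "coin_b C" and ?c = "coin_c C" and ?d = "coin_d C"
    have m1: "-j - 1 = -(j+1)" "-j + 1 = -(j-1)" by simp_all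
    have A0: "fst (walk_state C \<gamma> (Suc n) (-j)) = ?a * u (-j - 1) + ?b * v (-j - 1)"
      by (simp add: walk_state_Suc walk_def coin_apply_def u_def v_def)
    note A = A0[unfolded m1]
    have A2: "fst (walk_state C \<gamma> (Suc n) j) = ?a * u (j-1) + ?b * v (j-1)"
      by (simp add: walk_state_Suc walk_def coin_apply_def u_def v_def)
    have B0: "snd (walk_state C \<gamma> (Suc n) (-j)) = ?c * u (-j + 1) + ?d * v (-j + 1)"
      by (simp add: walk_state_Suc walk_def coin_apply_def u_def v_def)
    note B = B0[unfolded m1]
    have B2: "snd (walk_state C \<gamma> (Suc n) j) = ?c * u (j+1) + ?d * v (j+1)"
      by (simp add: walk_state_Suc walk_def coin_apply_def u_def v_def)
    have wj: "w j = z * w (j-1)" using wS[rule_format, of "j-1"] by simp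
    have "fst (walk_state C \<gamma> (Suc n) (-j)) = z * w j * (?a * X n * v (j+1) + ?b * Y n * u (j+1))"
      unfolding A IH1 IH2 wS[rule_format] by (simp add: algebra_simps)
    also have "\<dots> = w j * ((z * ?a * X n) * v (j+1) + (z * ?b * Y n) * u (j+1))"
      by (simp add: algebra_simps)
    also have "\<dots> = w j * X (Suc n) * snd (walk_state C \<gamma> (Suc n) j)"
      unfolding e1[rule_format] e2[rule_format] B2 by (simp add: algebra_simps)
    finally have P1: "fst (walk_state C \<gamma> (Suc n) (-j)) = w j * X (Suc n) * snd (walk_state C \<gamma> (Suc n) j)" .
    have "snd (walk_state C \<gamma> (Suc n) (-j)) = w (j-1) * (?c * X n * v (j-1) + ?d * Y n * u (j-1))"
      unfolding B IH1 IH2 by (simp add: algebra_simps)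
    also have "\<dots> = w (j-1) * ((?d * Y n) * u (j-1) + (?c * X n) * v (j-1))"
      by (simp add: algebra_simps)
    also have "\<dots> = w j * Y (Suc n) * fst (walk_state C \<gamma> (Suc n) j)"
      unfolding e3[rule_format] e4[rule_format] A2 wj by (simp add: algebra_simps)
    finally have P2: "snd (walk_state C \<gamma> (Suc n) (-j)) = w j * Y (Suc n) * fst (walk_state C \<gamma> (Suc n) j)" .
    show "fst (walk_state C \<gamma> (Suc n) (-j)) = w j * X (Suc n) * snd (walk_state C \<gamma> (Suc n) j) \<and>
             snd (walk_state C \<gamma> (Suc n) (-j)) = w j * Y (Suc n) * fst (walk_state C \<gamma> (Suc n) j)"
      using P1 P2 by blast
  qed
qed

lemma sym_general:
  fixes C :: coin and \<gamma> :: cvec and X Y :: "nat \<Rightarrow> complex" and z :: complex and w :: "int \<Rightarrow> complex"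
  assumes w0: "w 0 = 1" and wS: "\<forall>j. w (j+1) = z * w j" and wn: "\<forall>j. cmod (w j) = 1"
  and Xn: "\<forall>n. cmod (X n) = 1" and Yn: "\<forall>n. cmod (Y n) = 1"
  and e1: "\<forall>n. z * coin_a C * X n = X (Suc n) * coin_d C"
  and e2: "\<forall>n. z * coin_b C * Y n = X (Suc n) * coin_c C"
  and e3: "\<forall>n. coin_d C * Y n = z * Y (Suc n) * coin_a C"
  and e4: "\<forall>n. coin_c C * X n = z * Y (Suc n) * coin_b C"
  and g1: "fst \<gamma> = X 0 * snd \<gamma>" and g2: "snd \<gamma> = Y 0 * fst \<gamma>"
  shows "symmetric_in_distribution C \<gamma>"
  unfolding symmetric_in_distribution_def
proof (intro allI)
  fix j :: int and n :: nat
  have I: "fst (walk_state C \<gamma> n (-j)) = w j * X n * snd (walk_state C \<gamma> n j) \<and>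
             snd (walk_state C \<gamma> n (-j)) = w j * Y n * fst (walk_state C \<gamma> n j)"
    using sym_invariant[OF w0 wS e1 e2 e3 e4 g1 g2] by blast
  show "walk_prob C \<gamma> j n = walk_prob C \<gamma> (- j) n"
    unfolding walk_prob_def using I wn Xn Yn by (simp add: norm_mult)
qed



lemma aux_sum: "(x::complex) * y = (1 - x) * (1 - y) \<Longrightarrow> x + y = 1"
  by algebra

lemma col_alg:
  fixes a b c d :: complex
  assumes h1: "cnj a * a + cnj c * c = 1" and h2: "cnj b * b + cnj d * d = 1"
    and h3: "cnj a * b + cnj c * d = 0"
  shows "a * cnj a = d * cnj d" "b * cnj b = c * cnj c" "a * cnj b + c * cnj d = 0"
proof -
  have h3': "a * cnj b + c * cnj d = 0" using arg_cong[OF h3, of cnj] by (simp add: mult.commute)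
  have "(cnj a * b) * (a * cnj b) = (cnj c * d) * (c * cnj d)"
  proof -
    have x: "cnj a * b = - (cnj c * d)" using h3 by (simp add: eq_neg_iff_add_eq_0)
    have y: "a * cnj b = - (c * cnj d)" using h3' by (simp add: eq_neg_iff_add_eq_0)
    show ?thesis unfolding x y by simp
  qed
  hence P: "(a * cnj a) * (b * cnj b) = (c * cnj c) * (d * cnj d)" by (simp add: ac_simps)
  have q1: "c * cnj c = 1 - a * cnj a" using h1 by (simp add: algebra_simps eq_diff_eq)
  have q2: "d * cnj d = 1 - b * cnj b" using h2 by (simp add: algebra_simps eq_diff_eq)
  have "(a * cnj a) * (b * cnj b) = (1 - a * cnj a) * (1 - b * cnj b)"
    using P unfolding q1 q2 .
  hence s: "a * cnj a + b * cnj b = 1" using aux_sum by blast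
  have s1: "a * cnj a = 1 - b * cnj b" using s by (simp add: eq_diff_eq)
  have s2: "b * cnj b = 1 - a * cnj a" using s by (simp add: eq_diff_eq add.commute)
  show "a * cnj a = d * cnj d" using s1 q2 by simp
  show "b * cnj b = c * cnj c" using s2 q1 by simp
  show "a * cnj b + c * cnj d = 0" by (rule h3')
qed


lemma walk_apply: "walk C \<psi> j = (fst (coin_apply C (\<psi> (j - 1))), snd (coin_apply C (\<psi> (j + 1))))"
  by (simp add: walk_def)

lemma ws0: "walk_state C g 0 j = (if j = 0 then g else (0,0))"
  by (simp add: walk_state_def init_state_def)

lemma ws1:
  "walk_state C g (Suc 0) 1 = (coin_a C * fst g + coin_b C * snd g, 0)"
  "walk_state C g (Suc 0) (-1) = (0, coin_c C * fst g + coin_d C * snd g)"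
  "walk_state C g (Suc 0) 3 = (0,0)" "walk_state C g (Suc 0) (-3) = (0,0)" 
  using walk_state_Suc[of C g 0] by (simp_all add: walk_apply coin_apply_def ws0)

lemma ws2:
  "walk_state C g 2 2 = (coin_a C * (coin_a C * fst g + coin_b C * snd g), 0)"
  "walk_state C g 2 0 = (coin_b C * (coin_c C * fst g + coin_d C * snd g), coin_c C * (coin_a C * fst g + coin_b C * snd g))"
  "walk_state C g 2 (-2) = (0, coin_d C * (coin_c C * fst g + coin_d C * snd g))"
proof -
  have e: "walk_state C g 2 = walk C (walk_state C g (Suc 0))" by (simp add: walk_state_def numeral_2_eq_2)
  show "walk_state C g 2 2 = (coin_a C * (coin_a C * fst g + coin_b C * snd g), 0)"
  "walk_state C g 2 0 = (coin_b C * (coin_c C * fst g + coin_d C * snd g), coin_c C * (coin_a C * fst g + coin_b C * snd g))"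
  "walk_state C g 2 (-2) = (0, coin_d C * (coin_c C * fst g + coin_d C * snd g))"
    unfolding e by (simp_all add: walk_apply coin_apply_def ws1)
qed

lemma ws3:
  fixes C :: coin and g :: cvec
  defines "U \<equiv> coin_a C * fst g + coin_b C * snd g" and "D \<equiv> coin_c C * fst g + coin_d C * snd g"
  shows
  "walk_state C g 3 1 = (coin_a C * coin_b C * D + coin_b C * coin_c C * U, coin_a C * coin_c C * U)"
  "walk_state C g 3 (-1) = (coin_b C * coin_d C * D, coin_c C * coin_b C * D + coin_d C * coin_c C * U)"
proof -
  have e: "walk_state C g 3 = walk C (walk_state C g 2)" by (simp add: walk_state_def numeral_3_eq_3 numeral_2_eq_2)
  show "walk_state C g 3 1 = (coin_a C * coin_b C * D + coin_b C * coin_c C * U, coin_a C * coin_c C * U)"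
  "walk_state C g 3 (-1) = (coin_b C * coin_d C * D, coin_c C * coin_b C * D + coin_d C * coin_c C * U)"
    unfolding e by (simp_all add: walk_apply coin_apply_def ws2 U_def D_def mult.assoc)
qed



lemma unit_cis: "cmod z = 1 \<Longrightarrow> cis (Arg z) = z"
  by (subst cis_Arg) (auto simp: sgn_eq)

lemma sq_cnj: "complex_of_real ((cmod z)\<^sup>2) = z * cnj z"
  by (rule complex_norm_square)

lemma cmod_eq_from: "z * cnj z = w * cnj w \<Longrightarrow> cmod z = cmod w"
proof -
  assume "z * cnj z = w * cnj w"
  hence "complex_of_real ((cmod z)\<^sup>2) = complex_of_real ((cmod w)\<^sup>2)" by (simp only: sq_cnj)
  hence "(cmod z)\<^sup>2 = (cmod w)\<^sup>2" using of_real_eq_iff by blast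
  thus ?thesis by (simp add: power2_eq_iff_nonneg)
qed

lemma cmod1_from: "z * cnj z = 1 \<Longrightarrow> cmod z = 1"
  using cmod_eq_from[of z 1] by simp

lemma cnj_from_cmod1: "cmod z = 1 \<Longrightarrow> z * cnj z = 1"
  using sq_cnj[of z] by simp

lemma wfun:
  assumes "cmod z = 1"
  shows "(\<lambda>j::int. cis (Arg z * of_int j)) 0 = 1"
    "\<forall>j. (\<lambda>j::int. cis (Arg z * of_int j)) (j+1) = z * (\<lambda>j::int. cis (Arg z * of_int j)) j"
    "\<forall>j. cmod ((\<lambda>j::int. cis (Arg z * of_int j)) j) = 1"
proof -
  show "(\<lambda>j::int. cis (Arg z * of_int j)) 0 = 1" by simp
  show "\<forall>j. cmod ((\<lambda>j::int. cis (Arg z * of_int j)) j) = 1" by simp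
  show "\<forall>j. (\<lambda>j::int. cis (Arg z * of_int j)) (j+1) = z * (\<lambda>j::int. cis (Arg z * of_int j)) j"
  proof
    fix j :: int
    have "cis (Arg z * of_int (j+1)) = cis (Arg z) * cis (Arg z * of_int j)"
      by (simp add: cis_mult distrib_left algebra_simps)
    thus "(\<lambda>j::int. cis (Arg z * of_int j)) (j+1) = z * (\<lambda>j::int. cis (Arg z * of_int j)) j"
      using unit_cis[OF assms] by simp
  qed
qed



lemma coin_rel:
  assumes "unitary2 C"
  shows "cnj (coin_a C) * coin_a C + cnj (coin_c C) * coin_c C = 1"
    "cnj (coin_b C) * coin_b C + cnj (coin_d C) * coin_d C = 1"
    "cnj (coin_a C) * coin_b C + cnj (coin_c C) * coin_d C = 0"
    "coin_a C * cnj (coin_a C) = coin_d C * cnj (coin_d C)"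
    "coin_b C * cnj (coin_b C) = coin_c C * cnj (coin_c C)"
    "coin_a C * cnj (coin_b C) + coin_c C * cnj (coin_d C) = 0"
    "cmod (coin_a C) = cmod (coin_d C)" "cmod (coin_b C) = cmod (coin_c C)"
proof -
  note h = assms[unfolded unitary2_def]
  show 1: "cnj (coin_a C) * coin_a C + cnj (coin_c C) * coin_c C = 1"
    "cnj (coin_b C) * coin_b C + cnj (coin_d C) * coin_d C = 1"
    "cnj (coin_a C) * coin_b C + cnj (coin_c C) * coin_d C = 0" using h by blast+
  note c = col_alg[OF 1]
  show "coin_a C * cnj (coin_a C) = coin_d C * cnj (coin_d C)"
    "coin_b C * cnj (coin_b C) = coin_c C * cnj (coin_c C)"
    "coin_a C * cnj (coin_b C) + coin_c C * cnj (coin_d C) = 0" using c by blast+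
  show "cmod (coin_a C) = cmod (coin_d C)" "cmod (coin_b C) = cmod (coin_c C)"
    using cmod_eq_from[OF c(1)] cmod_eq_from[OF c(2)] by blast+
qed

lemma exist_nt:
  assumes u: "unitary2 C" and nt: "\<not> trivial_coin C"
    and l2: "l^2 * (coin_d C * coin_b C / (coin_a C * coin_c C)) = 1" and l1: "cmod l = 1"
  shows "symmetric_in_distribution C (s, l * s)"
proof -
  let ?a = "coin_a C" and ?b = "coin_b C" and ?c = "coin_c C" and ?d = "coin_d C"
  have nz: "?a \<noteq> 0" "?b \<noteq> 0" "?c \<noteq> 0" "?d \<noteq> 0" using nt by (auto simp: trivial_coin_def)
  note cr = coin_rel[OF u]
  define z where "z = ?d / ?a"
  define r where "r = ?d * ?b / (?a * ?c)"
  have zn: "cmod z = 1" using nz cr(7) by (simp add: z_def norm_divide)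
  have rn: "cmod r = 1" using nz cr(7,8) by (simp add: r_def norm_divide norm_mult)
  define w where "w = (\<lambda>j::int. cis (Arg z * of_int j))"
  show ?thesis
  proof (rule sym_general[where w=w and z=z and X="\<lambda>n. r * l" and Y="\<lambda>n. l"])
    show "w 0 = 1" "\<forall>j. cmod (w j) = 1" unfolding w_def by simp_all
    show "\<forall>j. w (j + 1) = z * w j" unfolding w_def using wfun(2)[OF zn] by blast
    show "\<forall>n. cmod (r * l) = 1" "\<forall>n. cmod l = 1" using rn l1 by (auto simp: norm_mult)
    show "\<forall>n. z * ?a * (r * l) = r * l * ?d" using nz by (simp add: z_def)
    show "\<forall>n. z * ?b * l = r * l * ?c" using nz by (simp add: z_def r_def)
    show "\<forall>n. ?d * l = z * l * ?a" using nz by (simp add: z_def)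
    show "\<forall>n. ?c * (r * l) = z * l * ?b" using nz by (simp add: z_def r_def)
    have rl: "l^2 * r = 1" using l2 unfolding r_def .
    have "r * l * (l * s) = (l^2 * r) * s" by (simp add: power2_eq_square ac_simps)
    then show "fst (s, l * s) = r * l * snd (s, l * s)" using rl by simp
    show "snd (s, l * s) = l * fst (s, l * s)" by simp
  qed
qed



lemma key_alg:
  fixes a b c d U D a' b' c' d' U' D' :: complex
  assumes "c*c' = b*b'" "d*d' = a*a'"
  shows "(a*b*D + b*c*U)*(a'*b'*D' + b'*c'*U') + (a*c*U)*(a'*c'*U') - ((b*d*D)*(b'*d'*D') + (c*b*D+d*c*U)*(c'*b'*D'+d'*c'*U'))
     = (b*b')*((b*b')*(U*U' - D*D') + (a*c' - b*d')*D*U' + (a'*c - b'*d)*U*D')"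
  using assms by algebra

lemma iso_alg:
  fixes a b c d x y :: complex
  assumes h1: "cnj a * a + cnj c * c = 1" and h2: "cnj b * b + cnj d * d = 1"
    and h3: "cnj a * b + cnj c * d = 0"
  shows "(a*x + b*y) * cnj (a*x + b*y) + (c*x + d*y) * cnj (c*x + d*y) = x * cnj x + y * cnj y"
proof -
  have h3': "a * cnj b + c * cnj d = 0" using arg_cong[OF h3, of cnj] by (simp add: mult.commute)
  have E: "(a*x + b*y) * cnj (a*x + b*y) + (c*x + d*y) * cnj (c*x + d*y)
     = x*cnj x*(cnj a*a + cnj c*c) + y*cnj y*(cnj b*b+cnj d*d) + x*cnj y*(a*cnj b + c * cnj d) + y*cnj x*(cnj a*b+cnj c*d)"
    by (simp add: algebra_simps)
  show ?thesis unfolding E h1 h2 h3 h3' by simp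
qed

lemma nec:
  assumes u: "unitary2 C" and nb: "coin_b C \<noteq> 0" and un: "unit_vec g"
    and sy: "symmetric_in_distribution C g"
  defines "U \<equiv> coin_a C * fst g + coin_b C * snd g" and "D \<equiv> coin_c C * fst g + coin_d C * snd g"
    and "K \<equiv> cnj (coin_a C) * coin_c C - cnj (coin_b C) * coin_d C"
  shows "U * cnj U = 1/2" "D * cnj D = 1/2" "K * U * cnj D + cnj K * D * cnj U = 0"
proof -
  let ?a = "coin_a C" and ?b = "coin_b C" and ?c = "coin_c C" and ?d = "coin_d C"
  note cr = coin_rel[OF u]
  have s1: "walk_prob C g 1 (Suc 0) = walk_prob C g (-1) (Suc 0)"
    using sy unfolding symmetric_in_distribution_def by (metis minus_minus)
  hence "(cmod U)\<^sup>2 = (cmod D)\<^sup>2"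
    unfolding walk_prob_def ws1 U_def D_def by simp
  hence "complex_of_real ((cmod U)\<^sup>2) = complex_of_real ((cmod D)\<^sup>2)" by simp
  hence UD: "U * cnj U = D * cnj D" unfolding sq_cnj .
  have "complex_of_real ((cmod (fst g))\<^sup>2 + (cmod (snd g))\<^sup>2) = 1"
    using un unfolding unit_vec_def by simp
  hence g1: "fst g * cnj (fst g) + snd g * cnj (snd g) = 1" unfolding of_real_add sq_cnj .
  have sum: "U * cnj U + D * cnj D = 1"
    unfolding U_def D_def iso_alg[OF cr(1,2,3)] g1 ..
  show U2: "U * cnj U = 1/2" using UD sum by (simp add: field_simps)
  show D2: "D * cnj D = 1/2" using UD sum by (simp add: field_simps)
  have s3: "walk_prob C g 1 3 = walk_prob C g (-1) 3"
    using sy unfolding symmetric_in_distribution_def by (metis minus_minus)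
  define X1 where "X1 = ?a * ?b * D + ?b * ?c * U"
  define X2 where "X2 = ?a * ?c * U"
  define X3 where "X3 = ?b * ?d * D"
  define X4 where "X4 = ?c * ?b * D + ?d * ?c * U"
  have "(cmod X1)\<^sup>2 + (cmod X2)\<^sup>2 = (cmod X3)\<^sup>2 + (cmod X4)\<^sup>2"
    using s3 unfolding walk_prob_def ws3 X1_def X2_def X3_def X4_def U_def D_def by simp
  hence "complex_of_real ((cmod X1)\<^sup>2 + (cmod X2)\<^sup>2) = complex_of_real ((cmod X3)\<^sup>2 + (cmod X4)\<^sup>2)"
    by simp
  hence E3: "X1 * cnj X1 + X2 * cnj X2 - (X3 * cnj X3 + X4 * cnj X4) = 0"
    unfolding of_real_add sq_cnj by simp
  have cx: "cnj X1 = cnj ?a * cnj ?b * cnj D + cnj ?b * cnj ?c * cnj U"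
    "cnj X2 = cnj ?a * cnj ?c * cnj U" "cnj X3 = cnj ?b * cnj ?d * cnj D"
    "cnj X4 = cnj ?c * cnj ?b * cnj D + cnj ?d * cnj ?c * cnj U"
    unfolding X1_def X2_def X3_def X4_def by simp_all
  have ka: "?c * cnj ?c = ?b * cnj ?b" "?d * cnj ?d = ?a * cnj ?a" using cr(4,5) by simp_all
  have "(?b * cnj ?b) * ((?b * cnj ?b) * (U * cnj U - D * cnj D) + (?a * cnj ?c - ?b * cnj ?d) * D * cnj U
          + (cnj ?a * ?c - cnj ?b * ?d) * U * cnj D) = 0"
    using E3 unfolding cx unfolding X1_def X2_def X3_def X4_def key_alg[OF ka] .
  moreover have "?b * cnj ?b \<noteq> 0" using nb by simp
  ultimately have "(?b * cnj ?b) * (U * cnj U - D * cnj D) + (?a * cnj ?c - ?b * cnj ?d) * D * cnj U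
          + (cnj ?a * ?c - cnj ?b * ?d) * U * cnj D = 0" by simp
  moreover have "cnj K = ?a * cnj ?c - ?b * cnj ?d" unfolding K_def by simp
  ultimately show "K * U * cnj D + cnj K * D * cnj U = 0" using UD unfolding K_def by (simp add: algebra_simps)
qed



lemma inv_alg:
  fixes a b c d x y :: complex
  assumes h1: "cnj a * a + cnj c * c = 1" and h2: "cnj b * b + cnj d * d = 1"
    and h3: "cnj a * b + cnj c * d = 0"
  shows "cnj a * (a*x + b*y) + cnj c * (c*x + d*y) = x"
    "cnj b * (a*x + b*y) + cnj d * (c*x + d*y) = y"
proof -
  have h3': "cnj b * a + cnj d * c = 0" using arg_cong[OF h3, of cnj] by (simp add: mult.commute)
  have "cnj a * (a*x + b*y) + cnj c * (c*x + d*y) = x * (cnj a * a + cnj c * c) + y * (cnj a * b + cnj c * d)"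
    by (simp add: algebra_simps)
  thus "cnj a * (a*x + b*y) + cnj c * (c*x + d*y) = x" unfolding h1 h3 by simp
  have "cnj b * (a*x + b*y) + cnj d * (c*x + d*y) = x * (cnj b * a + cnj d * c) + y * (cnj b * b + cnj d * d)"
    by (simp add: algebra_simps)
  thus "cnj b * (a*x + b*y) + cnj d * (c*x + d*y) = y" unfolding h2 h3' by simp
qed

lemma K_nz:
  assumes u: "unitary2 C" and nt: "\<not> trivial_coin C"
  shows "cnj (coin_a C) * coin_c C - cnj (coin_b C) * coin_d C \<noteq> 0"
proof
  let ?a = "coin_a C" and ?b = "coin_b C" and ?c = "coin_c C" and ?d = "coin_d C"
  have nz: "?a \<noteq> 0" "?b \<noteq> 0" "?c \<noteq> 0" "?d \<noteq> 0" using nt by (auto simp: trivial_coin_def)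
  note cr = coin_rel[OF u]
  assume "cnj ?a * ?c - cnj ?b * ?d = 0"
  hence "cnj ?a * ?c = cnj ?b * ?d" by simp
  hence "?a * cnj ?a * ?c = (?a * cnj ?b) * ?d" by (simp add: ac_simps)
  also have "?a * cnj ?b = - (?c * cnj ?d)" using cr(6) by (simp add: eq_neg_iff_add_eq_0)
  finally have "?a * cnj ?a * ?c = - (?c * (?d * cnj ?d))" by (simp add: ac_simps)
  hence "?a * cnj ?a * ?c = - (?c * (?a * cnj ?a))" unfolding cr(4) .
  hence "2 * (?a * cnj ?a) * ?c = 0" by (simp add: algebra_simps)
  thus False using nz by simp
qed

lemma tsq:
  assumes u: "unitary2 C" and nb: "coin_b C \<noteq> 0" and un: "unit_vec g"
    and sy: "symmetric_in_distribution C g"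
  defines "U \<equiv> coin_a C * fst g + coin_b C * snd g" and "D \<equiv> coin_c C * fst g + coin_d C * snd g"
    and "K \<equiv> cnj (coin_a C) * coin_c C - cnj (coin_b C) * coin_d C"
  shows "(K * (U * cnj D))^2 = - (K * cnj K) / 4"
proof -
  note n = nec[OF u nb un sy, folded U_def D_def K_def]
  define t where "t = K * (U * cnj D)"
  have ct: "cnj t = cnj K * D * cnj U" unfolding t_def by (simp add: ac_simps)
  have tt: "t = - cnj t" using n(3) unfolding ct t_def by (simp add: algebra_simps eq_neg_iff_add_eq_0)
  have "t^2 = - (t * cnj t)" using arg_cong[OF tt, of "\<lambda>x. t * x"] by (simp add: power2_eq_square)
  also have "t * cnj t = (K * cnj K) * (U * cnj U) * (D * cnj D)" unfolding t_def by (simp add: ac_simps)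
  also have "\<dots> = (K * cnj K) / 4" unfolding n(1,2) by simp
  finally show ?thesis unfolding t_def by simp
qed

lemma q_phase:
  assumes u: "unitary2 C" and nb: "coin_b C \<noteq> 0"
    and ug: "unit_vec g" and sg: "symmetric_in_distribution C g"
    and ue: "unit_vec e" and se: "symmetric_in_distribution C e"
    and eq: "(coin_a C * fst g + coin_b C * snd g) * cnj (coin_c C * fst g + coin_d C * snd g)
           = (coin_a C * fst e + coin_b C * snd e) * cnj (coin_c C * fst e + coin_d C * snd e)"
  shows "phase_equiv g e"
proof -
  let ?a = "coin_a C" and ?b = "coin_b C" and ?c = "coin_c C" and ?d = "coin_d C"
  define Ug where "Ug = ?a * fst g + ?b * snd g"
  define Dg where "Dg = ?c * fst g + ?d * snd g"
  define Ue where "Ue = ?a * fst e + ?b * snd e"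
  define De where "De = ?c * fst e + ?d * snd e"
  note ng = nec[OF u nb ug sg, folded Ug_def Dg_def]
  note ne = nec[OF u nb ue se, folded Ue_def De_def]
  note cr = coin_rel[OF u]
  have eq': "Ug * cnj Dg = Ue * cnj De" using eq unfolding Ug_def Dg_def Ue_def De_def .
  have Uenz: "Ue \<noteq> 0" using ne(1) by auto
  have Ugnz: "Ug \<noteq> 0" using ng(1) by auto
  define \<mu> where "\<mu> = Ug / Ue"
  have m1: "Ug = \<mu> * Ue" unfolding \<mu>_def using Uenz by simp
  have "cnj Ug * Dg = cnj Ue * De" using arg_cong[OF eq', of cnj] by (simp add: ac_simps)
  hence "(Ug * cnj Ug) * Dg = Ug * cnj Ue * De" by (metis mult.assoc)
  hence A: "Dg = 2 * Ug * cnj Ue * De" unfolding ng(1) by (simp add: field_simps)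
  have "\<mu> * De = Ug * De * cnj Ue / (Ue * cnj Ue)" unfolding \<mu>_def using Uenz by (simp add: field_simps)
  also have "\<dots> = 2 * Ug * cnj Ue * De" unfolding ne(1) by (simp add: field_simps)
  finally have B: "\<mu> * De = 2 * Ug * cnj Ue * De" .
  have m2: "Dg = \<mu> * De" using A B by (rule trans[OF _ sym])
  have "fst g = cnj ?a * Ug + cnj ?c * Dg" unfolding Ug_def Dg_def using inv_alg(1)[OF cr(1,2,3)] by simp
  also have "\<dots> = \<mu> * (cnj ?a * Ue + cnj ?c * De)" unfolding m1 m2 by (simp add: algebra_simps)
  also have "cnj ?a * Ue + cnj ?c * De = fst e" unfolding Ue_def De_def using inv_alg(1)[OF cr(1,2,3)] by simp
  finally have f1: "fst g = \<mu> * fst e" .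
  have "snd g = cnj ?b * Ug + cnj ?d * Dg" unfolding Ug_def Dg_def using inv_alg(2)[OF cr(1,2,3)] by simp
  also have "\<dots> = \<mu> * (cnj ?b * Ue + cnj ?d * De)" unfolding m1 m2 by (simp add: algebra_simps)
  also have "cnj ?b * Ue + cnj ?d * De = snd e" unfolding Ue_def De_def using inv_alg(2)[OF cr(1,2,3)] by simp
  finally have f2: "snd g = \<mu> * snd e" .
  have "\<mu> * cnj \<mu> = (Ug * cnj Ug) / (Ue * cnj Ue)" unfolding \<mu>_def by simp
  hence "\<mu> * cnj \<mu> = 1" unfolding ng(1) ne(1) by simp
  hence "cmod \<mu> = 1" by (rule cmod1_from)
  hence "cis (Arg \<mu>) = \<mu>" by (rule unit_cis)
  thus ?thesis unfolding phase_equiv_def using f1 f2 by (metis prod.collapse)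
qed



lemma exist_triv:
  assumes u: "unitary2 C" and tr: "trivial_coin C" and l1: "cmod l = 1"
  shows "symmetric_in_distribution C (s, l * s)"
proof -
  let ?a = "coin_a C" and ?b = "coin_b C" and ?c = "coin_c C" and ?d = "coin_d C"
  note cr = coin_rel[OF u]
  have ll: "l * cnj l = 1" by (rule cnj_from_cmod1[OF l1])
  have w: "(\<lambda>j::int. (1::complex)) 0 = 1" "\<forall>j. (\<lambda>j::int. (1::complex)) (j+1) = 1 * (\<lambda>j::int. (1::complex)) j"
    "\<forall>j. cmod ((\<lambda>j::int. (1::complex)) j) = 1" by simp_all
  have g1: "fst (s, l * s) = cnj l * snd (s, l * s)"
  proof -
    have "cnj l * snd (s, l * s) = (l * cnj l) * s" by simp
    thus ?thesis unfolding ll by simp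
  qed
  have g2: "snd (s, l * s) = l * fst (s, l * s)" by simp
  show ?thesis
  proof (cases "?b = 0")
    case True
    have "?c * cnj ?d = 0" using cr(6) True by simp
    moreover have "cnj ?d * ?d = 1" using cr(2) True by simp
    ultimately have c0: "?c = 0" by auto
    have aa: "cnj ?a * ?a = 1" using cr(1) c0 by simp
    have an: "cmod ?a = 1" using cmod1_from[of ?a] aa by (simp add: mult.commute)
    have dn: "cmod ?d = 1" using an cr(7) by simp
    have a0: "?a \<noteq> 0" "?d \<noteq> 0" using an dn by auto
    show ?thesis
    proof (rule sym_general[OF w, where X="\<lambda>n. (?a / ?d)^n * cnj l" and Y="\<lambda>n. (?d / ?a)^n * l"])
      show "\<forall>n. cmod ((?a / ?d)^n * cnj l) = 1" "\<forall>n. cmod ((?d / ?a)^n * l) = 1"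
        using an dn l1 by (simp_all add: norm_mult norm_power norm_divide)
      show "\<forall>n. 1 * ?a * ((?a / ?d)^n * cnj l) = (?a / ?d)^(Suc n) * cnj l * ?d"
        using a0 by simp
      show "\<forall>n. 1 * ?b * ((?d / ?a)^n * l) = (?a / ?d)^(Suc n) * cnj l * ?c" using True c0 by simp
      show "\<forall>n. ?d * ((?d / ?a)^n * l) = 1 * ((?d / ?a)^(Suc n) * l) * ?a" using a0 by simp
      show "\<forall>n. ?c * ((?a / ?d)^n * cnj l) = 1 * ((?d / ?a)^(Suc n) * l) * ?b" using True c0 by simp
      show "fst (s, l * s) = (?a / ?d)^0 * cnj l * snd (s, l * s)" using g1 by simp
      show "snd (s, l * s) = (?d / ?a)^0 * l * fst (s, l * s)" using g2 by simp
    qed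
  next
    case False
    have cc: "cnj ?c * ?c = 1" and a0: "?a = 0" and d0: "?d = 0"
    proof -
      have "?a = 0 \<or> ?c = 0 \<or> ?d = 0" using tr False by (auto simp: trivial_coin_def)
      moreover have "?c = 0 \<Longrightarrow> False"
      proof -
        assume c0: "?c = 0"
        hence "cnj ?a * ?a = 1" using cr(1) by simp
        hence "?a \<noteq> 0" by auto
        moreover have "cnj ?a * ?b = 0" using cr(3) c0 by simp
        ultimately show False using False by simp
      qed
      moreover have "?d = 0 \<Longrightarrow> ?a = 0" using cr(3) False by simp
      ultimately have A: "?a = 0" by blast
      show "cnj ?c * ?c = 1" using cr(1) A by simp
      then have "?c \<noteq> 0" by auto
      moreover have "cnj ?c * ?d = 0" using cr(3) A by simp
      ultimately show "?d = 0" by simp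
      show "?a = 0" by (rule A)
    qed
    have cn: "cmod ?c = 1" using cmod1_from[of ?c] cc by (simp add: mult.commute)
    have bn: "cmod ?b = 1" using cn cr(8) by simp
    have nz: "?b \<noteq> 0" "?c \<noteq> 0" using bn cn by auto
    show ?thesis
    proof (rule sym_general[OF w, where X="\<lambda>n. if even n then cnj l else (?b / ?c) * l"
          and Y="\<lambda>n. if even n then l else (?c / ?b) * cnj l"])
      show "\<forall>n. cmod (if even n then cnj l else (?b / ?c) * l) = 1"
        "\<forall>n. cmod (if even n then l else (?c / ?b) * cnj l) = 1"
        using bn cn l1 by (simp_all add: norm_mult norm_divide)
      show "\<forall>n. 1 * ?a * (if even n then cnj l else (?b / ?c) * l) = (if even (Suc n) then cnj l else (?b / ?c) * l) * ?d"
        using a0 d0 by simp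
      show "\<forall>n. 1 * ?b * (if even n then l else (?c / ?b) * cnj l) = (if even (Suc n) then cnj l else (?b / ?c) * l) * ?c"
        using nz by simp
      show "\<forall>n. ?d * (if even n then l else (?c / ?b) * cnj l) = 1 * (if even (Suc n) then l else (?c / ?b) * cnj l) * ?a"
        using a0 d0 by simp
      show "\<forall>n. ?c * (if even n then cnj l else (?b / ?c) * l) = 1 * (if even (Suc n) then l else (?c / ?b) * cnj l) * ?b"
        using nz by simp
      show "fst (s, l * s) = (if even 0 then cnj l else (?b / ?c) * l) * snd (s, l * s)" using g1 by simp
      show "snd (s, l * s) = (if even 0 then l else (?c / ?b) * cnj l) * fst (s, l * s)" using g2 by simp
    qed
  qed
qed



definition s0 :: complex where "s0 = complex_of_real (1 / sqrt 2)"

lemma s0_nz: "s0 \<noteq> 0" by (simp add: s0_def)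

lemma s_unit:
  assumes "cmod l = 1" shows "unit_vec (s0, l * s0)"
proof -
  have n: "cmod s0 = 1 / sqrt 2" unfolding s0_def by (simp add: norm_divide)
  have "(1 / sqrt 2)^2 = (1/2::real)" by (simp add: power_divide)
  thus ?thesis unfolding unit_vec_def using assms by (simp add: norm_mult n)
qed

lemma pe_eq:
  assumes "phase_equiv (s0, l * s0) (s0, l' * s0)" shows "l = l'"
proof -
  obtain \<eta> where e: "s0 = cis \<eta> * s0" "l * s0 = cis \<eta> * (l' * s0)"
    using assms unfolding phase_equiv_def by auto
  have "cis \<eta> = 1" using e(1) s0_nz
    by (metis mult_cancel_right1)
  thus ?thesis using e(2) s0_nz by simp
qed

lemma nontriv_part:
  assumes u: "unitary2 C" and nt: "\<not> trivial_coin C"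
  shows "\<exists>\<gamma>1 \<gamma>2. unit_vec \<gamma>1 \<and> unit_vec \<gamma>2 \<and>
                symmetric_in_distribution C \<gamma>1 \<and> symmetric_in_distribution C \<gamma>2 \<and>
                \<not> phase_equiv \<gamma>1 \<gamma>2 \<and>
                (\<forall>\<gamma>. unit_vec \<gamma> \<and> symmetric_in_distribution C \<gamma> \<longrightarrow>
                      phase_equiv \<gamma> \<gamma>1 \<or> phase_equiv \<gamma> \<gamma>2)"
proof -
  let ?a = "coin_a C" and ?b = "coin_b C" and ?c = "coin_c C" and ?d = "coin_d C"
  have nz: "?a \<noteq> 0" "?b \<noteq> 0" "?c \<noteq> 0" "?d \<noteq> 0" using nt by (auto simp: trivial_coin_def)
  note cr = coin_rel[OF u]
  define r where "r = ?d * ?b / (?a * ?c)"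
  have rn: "cmod r = 1" using nz cr(7,8) by (simp add: r_def norm_divide norm_mult)
  define l where "l = csqrt (cnj r)"
  have lsq: "l^2 = cnj r" unfolding l_def by simp
  have ln: "cmod l = 1" unfolding l_def using rn by simp
  have l2: "l^2 * r = 1" unfolding lsq using cnj_from_cmod1[OF rn] by (simp add: mult.commute)
  have l2': "(-l)^2 * r = 1" using l2 by simp
  have ln': "cmod (-l) = 1" using ln by simp
  define e1 where "e1 = (s0, l * s0)"
  define e2 where "e2 = (s0, (-l) * s0)"
  have u1: "unit_vec e1" and u2: "unit_vec e2" unfolding e1_def e2_def using s_unit ln ln' by blast+
  have sy1: "symmetric_in_distribution C e1" unfolding e1_def
    using exist_nt[OF u nt l2[unfolded r_def] ln] .
  have sy2: "symmetric_in_distribution C e2" unfolding e2_def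
    using exist_nt[OF u nt l2'[unfolded r_def] ln'] .
  have np: "\<not> phase_equiv e1 e2"
  proof
    assume "phase_equiv e1 e2"
    hence "l = -l" unfolding e1_def e2_def by (rule pe_eq)
    hence "l = 0" by simp
    thus False using ln by simp
  qed
  define K where "K = cnj ?a * ?c - cnj ?b * ?d"
  have Knz: "K \<noteq> 0" unfolding K_def by (rule K_nz[OF u nt])
  define t where "t = (\<lambda>g::cvec. K * ((?a * fst g + ?b * snd g) * cnj (?c * fst g + ?d * snd g)))"
  have tsq': "\<And>g. unit_vec g \<Longrightarrow> symmetric_in_distribution C g \<Longrightarrow> (t g)^2 = - (K * cnj K) / 4"
    unfolding t_def K_def by (rule tsq[OF u nz(2)])
  have tph: "\<And>g e. unit_vec g \<Longrightarrow> symmetric_in_distribution C g \<Longrightarrow> unit_vec e \<Longrightarrow>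
      symmetric_in_distribution C e \<Longrightarrow> t g = t e \<Longrightarrow> phase_equiv g e"
  proof -
    fix g e assume a: "unit_vec g" "symmetric_in_distribution C g" "unit_vec e"
      "symmetric_in_distribution C e" "t g = t e"
    from a(5) Knz have "(?a * fst g + ?b * snd g) * cnj (?c * fst g + ?d * snd g)
           = (?a * fst e + ?b * snd e) * cnj (?c * fst e + ?d * snd e)" unfolding t_def by simp
    thus "phase_equiv g e" by (rule q_phase[OF u nz(2) a(1-4)])
  qed
  have t12: "t e1 \<noteq> t e2" using tph[OF u1 sy1 u2 sy2] np by blast
  have t12': "t e2 = - t e1"
  proof -
    have "(t e2)^2 = (t e1)^2" using tsq'[OF u1 sy1] tsq'[OF u2 sy2] by simp
    thus ?thesis using t12 by (simp add: power2_eq_iff)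
  qed
  show ?thesis
  proof (intro exI conjI allI impI)
    show "unit_vec e1" "unit_vec e2" "symmetric_in_distribution C e1" "symmetric_in_distribution C e2"
      "\<not> phase_equiv e1 e2" by (fact u1 u2 sy1 sy2 np)+
    fix g assume g: "unit_vec g \<and> symmetric_in_distribution C g"
    have "(t g)^2 = (t e1)^2" using tsq'[OF u1 sy1] tsq' g by simp
    hence "t g = t e1 \<or> t g = t e2" using t12' by (simp add: power2_eq_iff)
    thus "phase_equiv g e1 \<or> phase_equiv g e2"
      using tph[OF _ _ u1 sy1] tph[OF _ _ u2 sy2] g by blast
  qed
qed

lemma triv_part:
  assumes u: "unitary2 C" and tr: "trivial_coin C"
  shows "\<exists>S. uncountable S \<and>
                (\<forall>\<gamma>\<in>S. unit_vec \<gamma> \<and> symmetric_in_distribution C \<gamma>) \<and>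
                (\<forall>\<gamma>\<in>S. \<forall>\<gamma>'\<in>S. \<gamma> \<noteq> \<gamma>' \<longrightarrow> \<not> phase_equiv \<gamma> \<gamma>')"
proof -
  define L where "L = (\<lambda>x::real. Complex x (sqrt (1 - x^2)))"
  define f where "f = (\<lambda>x::real. (s0, L x * s0))"
  define S where "S = f ` {-1<..<1}"
  have Ln: "cmod (L x) = 1" if "x \<in> {-1<..<1}" for x
  proof -
    have "\<bar>x\<bar> < 1" using that by auto
    hence "x^2 < 1" by (simp add: abs_square_less_1)
    thus ?thesis unfolding L_def cmod_def by simp
  qed
  have inj: "inj_on f {-1<..<1}"
  proof
    fix x y assume "f x = f y"
    hence "L x * s0 = L y * s0" unfolding f_def by simp
    hence "L x = L y" using s0_nz by simp
    thus "x = y" unfolding L_def by simp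
  qed
  have unc: "uncountable S"
  proof
    assume "countable S"
    hence "countable {-1<..<(1::real)}" using countable_image_inj_on inj unfolding S_def by blast
    thus False using uncountable_open_interval[of "-1" "1::real"] by simp
  qed
  have P1: "\<forall>g\<in>S. unit_vec g \<and> symmetric_in_distribution C g"
  proof
    fix g assume "g \<in> S"
    then obtain x where x: "x \<in> {-1<..<1}" "g = f x" unfolding S_def by auto
    show "unit_vec g \<and> symmetric_in_distribution C g"
      unfolding x f_def using s_unit[OF Ln[OF x(1)]] exist_triv[OF u tr Ln[OF x(1)]] by blast
  qed
  have P2: "\<forall>g\<in>S. \<forall>g'\<in>S. g \<noteq> g' \<longrightarrow> \<not> phase_equiv g g'"
  proof (intro ballI impI)
    fix g g' assume "g \<in> S" "g' \<in> S" "g \<noteq> g'"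
    then obtain x x' where x: "g = f x" "g' = f x'" unfolding S_def by auto
    show "\<not> phase_equiv g g'"
    proof
      assume "phase_equiv g g'"
      hence "L x = L x'" unfolding x f_def by (rule pe_eq)
      hence "g = g'" unfolding x f_def by simp
      thus False using \<open>g \<noteq> g'\<close> by simp
    qed
  qed
  show ?thesis using unc P1 P2 by blast
qed

theorem theorem1:
  fixes C :: coin
  assumes "unitary2 C"
  shows "(\<not> trivial_coin C \<longrightarrow>
            (\<exists>\<gamma>1 \<gamma>2. unit_vec \<gamma>1 \<and> unit_vec \<gamma>2 \<and>
                symmetric_in_distribution C \<gamma>1 \<and> symmetric_in_distribution C \<gamma>2 \<and>
                \<not> phase_equiv \<gamma>1 \<gamma>2 \<and>
                (\<forall>\<gamma>. unit_vec \<gamma> \<and> symmetric_in_distribution C \<gamma> \<longrightarrow>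
                      phase_equiv \<gamma> \<gamma>1 \<or> phase_equiv \<gamma> \<gamma>2)))
       \<and> (trivial_coin C \<longrightarrow>
            (\<exists>S. uncountable S \<and>
                (\<forall>\<gamma>\<in>S. unit_vec \<gamma> \<and> symmetric_in_distribution C \<gamma>) \<and>
                (\<forall>\<gamma>\<in>S. \<forall>\<gamma>'\<in>S. \<gamma> \<noteq> \<gamma>' \<longrightarrow> \<not> phase_equiv \<gamma> \<gamma>')))"
  using nontriv_part[OF assms] triv_part[OF assms] by blast

end
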